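(* Let $1\to N\to G\to\Gamma\to1$ be a short exact sequence of finite groups, with $N\lhd G$ and $\Gamma=G/N$. Then $\mathcal{K}_r^S(G/N)=1$ in the Burnside ring $\Omega(G)$ if and only if, for every prime $p$, the sequence of Sylow subgroups $1\to N_p\to G_p\to\Gamma_p\to1$ splits.
   Context: For a prime $p$ and a Sylow $p$-subgroup $G_p$ of $G$, $N_p=N\cap G_p$ and $\Gamma_p=(G_pN)/N$; a sequence $1\to A\to B\to B/A\to1$ splits if $A$ has a complement in $B$. $\Omega(G)$ is the Burnside ring of $G$ (Grothendieck ring of finite $G$-sets under disjoint union and Cartesian product), with dimension homomorphism $\alpha(X)=|X|$ and regular element $r=G/\{e\}$. $S=\{G/H_1,\dots,G/H_n\}$ where $H_1,\dots,H_n$ is a full set of representatives of the conjugacy classes of subgroups of $G$. For $x\in\Omega(G)$, $S(x)=\{s\in S: s\cdot x\in\mathbb{Z}r\}$, $\mathrm{Ind}(x)=\{m\in\mathbb{Z}: s\cdot x=m r \text{ for some } s\in S(x)\}$, and $\mathcal{K}_r^S(x)=\gcd(\mathrm{Ind}(x))$ (with $\mathcal{K}_r^S(x)=\infty$ if $S(x)=\emptyset$). *)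

theory Defs
  imports "HOL-Algebra.Algebra"
begin

definition gset :: "('a, 'b) monoid_scheme \<Rightarrow> 'x set \<Rightarrow> ('a \<Rightarrow> 'x \<Rightarrow> 'x) \<Rightarrow> bool" where
  "gset G U act \<longleftrightarrow> finite U
     \<and> (\<forall>g\<in>carrier G. \<forall>x\<in>U. act g x \<in> U)
     \<and> (\<forall>x\<in>U. act (monoid.one G) x = x)
     \<and> (\<forall>g\<in>carrier G. \<forall>h\<in>carrier G. \<forall>x\<in>U. act (monoid.mult G g h) x = act g (act h x))"

definition gset_iso ::
  "('a, 'b) monoid_scheme \<Rightarrow> 'x set \<Rightarrow> ('a \<Rightarrow> 'x \<Rightarrow> 'x) \<Rightarrow> 'y set \<Rightarrow> ('a \<Rightarrow> 'y \<Rightarrow> 'y) \<Rightarrow> bool" where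
  "gset_iso G U \<alpha> V \<beta> \<longleftrightarrow>
     (\<exists>f. bij_betw f U V \<and> (\<forall>g\<in>carrier G. \<forall>x\<in>U. f (\<alpha> g x) = \<beta> g (f x)))"

definition coset_space :: "('a, 'b) monoid_scheme \<Rightarrow> 'a set \<Rightarrow> 'a set set" where
  "coset_space G H = {l_coset G a H | a. a \<in> carrier G}"

definition coset_act :: "('a, 'b) monoid_scheme \<Rightarrow> 'a \<Rightarrow> 'a set \<Rightarrow> 'a set" where
  "coset_act G g C = l_coset G g C"

text \<open>Cartesian product of G-sets (diagonal action): the product in the Burnside ring.\<close>
definition prod_act :: "('a \<Rightarrow> 'x \<Rightarrow> 'x) \<Rightarrow> ('a \<Rightarrow> 'y \<Rightarrow> 'y) \<Rightarrow> 'a \<Rightarrow> 'x \<times> 'y \<Rightarrow> 'x \<times> 'y" where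
  "prod_act \<alpha> \<beta> g = (\<lambda>(x, y). (\<alpha> g x, \<beta> g y))"

text \<open>Disjoint union of G-sets: the sum in the Burnside ring.\<close>
definition sum_set :: "'x set \<Rightarrow> 'y set \<Rightarrow> ('x + 'y) set" where
  "sum_set U V = Inl ` U \<union> Inr ` V"

definition sum_act :: "('a \<Rightarrow> 'x \<Rightarrow> 'x) \<Rightarrow> ('a \<Rightarrow> 'y \<Rightarrow> 'y) \<Rightarrow> 'a \<Rightarrow> 'x + 'y \<Rightarrow> 'x + 'y" where
  "sum_act \<alpha> \<beta> g = case_sum (\<lambda>x. Inl (\<alpha> g x)) (\<lambda>y. Inr (\<beta> g y))"

text \<open>n copies of the regular G-set r = G/{e}, i.e. the G-set representing n * r.\<close>
definition reg_copies :: "('a, 'b) monoid_scheme \<Rightarrow> nat \<Rightarrow> (nat \<times> 'a) set" where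
  "reg_copies G n = {0..<n} \<times> carrier G"

definition reg_act :: "('a, 'b) monoid_scheme \<Rightarrow> 'a \<Rightarrow> nat \<times> 'a \<Rightarrow> nat \<times> 'a" where
  "reg_act G g = (\<lambda>(i, h). (i, monoid.mult G g h))"

text \<open>Omega(G) is the Grothendieck ring of finite G-sets. For a finite G-set X and an integer m,
  the equation [X] = m r holds in Omega(G) iff (Grothendieck group relation) there is a finite
  G-set Z with X + Z = m r + Z (for m >= 0), resp. X + |m| r + Z = Z (for m < 0), as G-sets up to
  isomorphism. The auxiliary G-set Z is taken on the carrier type nat * 'a set, which suffices
  since every finite G-set is isomorphic to a disjoint union of coset spaces.\<close>
definition burnside_eq_mult_reg ::
  "('a, 'b) monoid_scheme \<Rightarrow> 'x set \<Rightarrow> ('a \<Rightarrow> 'x \<Rightarrow> 'x) \<Rightarrow> int \<Rightarrow> bool" where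
  "burnside_eq_mult_reg G U \<alpha> m \<longleftrightarrow>
     (\<exists>(W :: (nat \<times> 'a set) set) \<zeta>. gset G W \<zeta> \<and>
        (if 0 \<le> m then
           gset_iso G (sum_set U W) (sum_act \<alpha> \<zeta>)
                      (sum_set (reg_copies G (nat m)) W) (sum_act (reg_act G) \<zeta>)
         else
           gset_iso G (sum_set (sum_set U (reg_copies G (nat (- m)))) W)
                      (sum_act (sum_act \<alpha> (reg_act G)) \<zeta>) W \<zeta>))"

definition conj_class_reps :: "('a, 'b) monoid_scheme \<Rightarrow> 'a set set \<Rightarrow> bool" where
  "conj_class_reps G Hs \<longleftrightarrow> (\<forall>H\<in>Hs. subgroup H G) \<and>
     (\<forall>K. subgroup K G \<longrightarrow>
        (\<exists>!H. H \<in> Hs \<and> (\<exists>g\<in>carrier G. K = r_coset G (l_coset G g H) (m_inv G g))))"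

text \<open>For a G-set x = (X, alpha), with S = {G/H : H in Hs}:
  S(x) = {H in Hs. G/H * x in Z r}, Ind(x) = {m. G/H * x = m r for some H in S(x)}.\<close>
definition S_of ::
  "('a, 'b) monoid_scheme \<Rightarrow> 'a set set \<Rightarrow> 'x set \<Rightarrow> ('a \<Rightarrow> 'x \<Rightarrow> 'x) \<Rightarrow> 'a set set" where
  "S_of G Hs U \<alpha> = {H \<in> Hs. \<exists>m. burnside_eq_mult_reg G (coset_space G H \<times> U) (prod_act (coset_act G) \<alpha>) m}"

definition Ind_of ::
  "('a, 'b) monoid_scheme \<Rightarrow> 'a set set \<Rightarrow> 'x set \<Rightarrow> ('a \<Rightarrow> 'x \<Rightarrow> 'x) \<Rightarrow> int set" where
  "Ind_of G Hs U \<alpha> = {m. \<exists>H \<in> S_of G Hs U \<alpha>.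
       burnside_eq_mult_reg G (coset_space G H \<times> U) (prod_act (coset_act G) \<alpha>) m}"

text \<open>K_r^S(x) = gcd(Ind(x)), with None standing for infinity when S(x) is empty.\<close>
definition K_rS ::
  "('a, 'b) monoid_scheme \<Rightarrow> 'a set set \<Rightarrow> 'x set \<Rightarrow> ('a \<Rightarrow> 'x \<Rightarrow> 'x) \<Rightarrow> int option" where
  "K_rS G Hs U \<alpha> = (if S_of G Hs U \<alpha> = {} then None else Some (Gcd (Ind_of G Hs U \<alpha>)))"

definition sylow_subgroup :: "('a, 'b) monoid_scheme \<Rightarrow> nat \<Rightarrow> 'a set \<Rightarrow> bool" where
  "sylow_subgroup G p P \<longleftrightarrow> subgroup P G \<and> card P = p ^ multiplicity p (order G)"

text \<open>The sequence 1 -> A -> B -> B/A -> 1 (A normal in B, both subgroups of G) splits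
  iff A has a complement in B.\<close>
definition has_complement :: "('a, 'b) monoid_scheme \<Rightarrow> 'a set \<Rightarrow> 'a set \<Rightarrow> bool" where
  "has_complement G A B \<longleftrightarrow>
     (\<exists>K. subgroup K G \<and> K \<subseteq> B \<and> K \<inter> A = {monoid.one G} \<and> set_mult G A K = B)"

end

theory Submission
  imports Defs
begin
lemma action_intro:
  fixes G (structure)
  assumes G: "group G"
    and cl: "\<And>g x. g \<in> carrier G \<Longrightarrow> x \<in> E \<Longrightarrow> act g x \<in> E"
    and one: "\<And>x. x \<in> E \<Longrightarrow> act \<one>\<^bsub>G\<^esub> x = x"
    and mul: "\<And>g h x. g \<in> carrier G \<Longrightarrow> h \<in> carrier G \<Longrightarrow> x \<in> E \<Longrightarrow> act (g \<otimes>\<^bsub>G\<^esub> h) x = act g (act h x)"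
  shows "group_action G E (\<lambda>g. restrict (act g) E)"
proof -
  interpret group G by (rule G)
  have bij: "restrict (act g) E \<in> Bij E" if g: "g \<in> carrier G" for g
  proof -
    have "bij_betw (act g) E E"
    proof (rule bij_betwI[where g="act (inv g)"])
      show "act g \<in> E \<rightarrow> E" using cl g by auto
      show "act (inv g) \<in> E \<rightarrow> E" using cl g by auto
      show "act (inv g) (act g x) = x" if "x \<in> E" for x
        using mul[of "inv g" g x] one that g by simp
      show "act g (act (inv g) x) = x" if "x \<in> E" for x
        using mul[of g "inv g" x] one that g by simp
    qed
    then show ?thesis unfolding Bij_def
      by (simp add: bij_betw_def inj_on_def)
  qed
  show ?thesis
    unfolding group_action_def group_hom_def group_hom_axioms_def
  proof (intro conjI)
    show "group G" by (rule G)
    show "group (BijGroup E)" by (rule group_BijGroup)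
    show "(\<lambda>g. restrict (act g) E) \<in> hom G (BijGroup E)"
    proof (rule homI)
      show "restrict (act x) E \<in> carrier (BijGroup E)" if "x \<in> carrier G" for x
        using bij that by (simp add: BijGroup_def)
      show "restrict (act (x \<otimes> y)) E = restrict (act x) E \<otimes>\<^bsub>BijGroup E\<^esub> restrict (act y) E"
        if "x \<in> carrier G" "y \<in> carrier G" for x y
        using bij[OF that(1)] bij[OF that(2)] that
        by (auto simp: BijGroup_def compose_def mul cl intro!: ext)
    qed
  qed
qed

lemma fixed_point_pgroup:
  fixes G (structure)
  assumes G: "group G" and fin: "finite (carrier G)" and ord: "order G = p ^ k"
    and p: "Factorial_Ring.prime p" and finE: "finite E" and ndvd: "\<not> p dvd card E"
    and cl: "\<And>g x. g \<in> carrier G \<Longrightarrow> x \<in> E \<Longrightarrow> act g x \<in> E"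
    and one: "\<And>x. x \<in> E \<Longrightarrow> act \<one> x = x"
    and mul: "\<And>g h x. g \<in> carrier G \<Longrightarrow> h \<in> carrier G \<Longrightarrow> x \<in> E \<Longrightarrow> act (g \<otimes> h) x = act g (act h x)"
  shows "\<exists>x\<in>E. \<forall>g\<in>carrier G. act g x = x"
proof (rule ccontr)
  assume nofix: "\<not> (\<exists>x\<in>E. \<forall>g\<in>carrier G. act g x = x)"
  define \<phi> where "\<phi> = (\<lambda>g. restrict (act g) E)"
  interpret ga: group_action G E \<phi>
    unfolding \<phi>_def by (rule action_intro[OF G cl one mul])
  have orbdvd: "p dvd card orb" if orb: "orb \<in> orbits G E \<phi>" for orb
  proof -
    obtain x where x: "x \<in> E" and orbx: "orb = orbit G \<phi> x"
      using orb unfolding orbits_def by blast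
    have "card (orbit G \<phi> x) * card (stabilizer G \<phi> x) = p ^ k"
      using ga.orbit_stabilizer_theorem[OF x] ord by simp
    then have "card orb dvd p ^ k" using orbx by (metis dvd_triv_left)
    then obtain i where i: "card orb = p ^ i" using divides_primepow_nat[OF p] by blast
    show ?thesis
    proof (cases i)
      case 0
      have xo: "x \<in> orb" using ga.orbit_refl[OF x] orbx by simp
      have fin_o: "finite orb" using orbx unfolding orbit_def
        using fin by (simp add: setcompr_eq_image)
      have "orb = {x}" using i 0 xo fin_o
        by (metis card_1_singletonE power_0 singletonD)
      then have "\<forall>g\<in>carrier G. act g x = x"
        using orbx x unfolding orbit_def \<phi>_def by auto
      then show ?thesis using nofix x by blast
    next
      case (Suc j)
      then show ?thesis using i by simp
    qed
  qed
  have "(\<Sum>orb\<in>orbits G E \<phi>. \<Sum>x\<in>orb. (1::nat)) = (\<Sum>x\<in>E. 1)"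
    by (rule ga.disjoint_sum[OF finE])
  then have "card E = (\<Sum>orb\<in>orbits G E \<phi>. card orb)" by simp
  moreover have "p dvd (\<Sum>orb\<in>orbits G E \<phi>. card orb)"
    by (rule dvd_sum) (rule orbdvd)
  ultimately show False using ndvd by simp
qed

lemma inv_image_lcoset:
  fixes G (structure)
  assumes "group G" "subgroup H G" "a \<in> carrier G"
  shows "(\<lambda>x. inv x) ` (a <# H) = H #> inv a"
proof -
  interpret group G by fact
  have Hc: "H \<subseteq> carrier G" using assms(2) subgroup.subset by blast
  show ?thesis
  proof
    show "(\<lambda>x. inv x) ` (a <# H) \<subseteq> H #> inv a"
    proof
      fix y assume "y \<in> (\<lambda>x. inv x) ` (a <# H)"
      then obtain h where h: "h \<in> H" "y = inv (a \<otimes> h)" by (auto simp: l_coset_def)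
      then have "y = inv h \<otimes> inv a" using Hc assms(3) by (auto simp: inv_mult_group)
      moreover have "inv h \<in> H" using h assms(2) by (simp add: subgroup.m_inv_closed)
      ultimately show "y \<in> H #> inv a" by (auto simp: r_coset_def)
    qed
    show "H #> inv a \<subseteq> (\<lambda>x. inv x) ` (a <# H)"
    proof
      fix y assume "y \<in> H #> inv a"
      then obtain h where h: "h \<in> H" "y = h \<otimes> inv a" by (auto simp: r_coset_def)
      have "y = inv (a \<otimes> inv h)" using h Hc assms(3) by (auto simp: inv_mult_group)
      moreover have "a \<otimes> inv h \<in> a <# H" using h assms by (auto simp: l_coset_def subgroup.m_inv_closed)
      ultimately show "y \<in> (\<lambda>x. inv x) ` (a <# H)" by blast
    qed
  qed
qed

lemma card_coset_space:
  fixes G (structure)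
  assumes "group G" "subgroup H G" "finite (carrier G)"
  shows "card (coset_space G H) * card H = order G" and "finite (coset_space G H)"
proof -
  interpret group G by fact
  have Hc: "H \<subseteq> carrier G" using assms(2) subgroup.subset by blast
  have sub: "C \<subseteq> carrier G" if "C \<in> coset_space G H" for C
    using that Hc by (auto simp: coset_space_def l_coset_def)
  have sub2: "C \<subseteq> carrier G" if "C \<in> rcosets H" for C
    using that Hc by (auto simp: RCOSETS_def r_coset_def)
  have ii: "(\<lambda>x. inv x) ` ((\<lambda>x. inv x) ` C) = C" if "C \<subseteq> carrier G" for C
    using that by (force simp: image_image)
  have "bij_betw (\<lambda>C. (\<lambda>x. inv x) ` C) (coset_space G H) (rcosets H)"
  proof (rule bij_betwI[where g="\<lambda>C. (\<lambda>x. inv x) ` C"])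
    show "(\<lambda>C. (\<lambda>x. inv x) ` C) \<in> coset_space G H \<rightarrow> rcosets H"
      using inv_image_lcoset[OF assms(1,2)] by (auto simp: coset_space_def RCOSETS_def)
    show "(\<lambda>C. (\<lambda>x. inv x) ` C) \<in> rcosets H \<rightarrow> coset_space G H"
    proof
      fix C assume "C \<in> rcosets H"
      then obtain b where b: "b \<in> carrier G" "C = H #> b" by (auto simp: RCOSETS_def)
      then have "C = (\<lambda>x. inv x) ` (inv b <# H)" using inv_image_lcoset[OF assms(1,2), of "inv b"] by simp
      then have "(\<lambda>x. inv x) ` C = inv b <# H"
        using ii[of "inv b <# H"] l_coset_subset_G[OF Hc, of "inv b"] b by simp
      then show "(\<lambda>x. inv x) ` C \<in> coset_space G H" using b by (auto simp: coset_space_def)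
    qed
  qed (use ii sub sub2 in auto)
  then have "card (coset_space G H) = card (rcosets H)" by (rule bij_betw_same_card)
  then show "card (coset_space G H) * card H = order G" using lagrange[OF assms(2)] by simp
  show "finite (coset_space G H)"
    using assms(3) unfolding coset_space_def by (simp add: setcompr_eq_image)
qed

lemma conj_eq_image:
  fixes G (structure)
  shows "b <# Q #> c = (\<lambda>q. b \<otimes> q \<otimes> c) ` Q"
  by (auto simp: l_coset_def r_coset_def)

lemma conj_subgroup:
  fixes G (structure)
  assumes G: "group G" and Q: "subgroup Q G" and a: "a \<in> carrier G"
  shows "subgroup (inv a <# Q #> a) G"
    and "card (inv a <# Q #> a) = card Q"
proof -
  interpret group G by (rule G)
  have Qc: "Q \<subseteq> carrier G" using Q subgroup.subset by blast
  show "subgroup (inv a <# Q #> a) G"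
    by (rule subgroup_conjugation_is_surj1[OF a Q])
  have "inj_on (\<lambda>q. inv a \<otimes> q \<otimes> a) Q"
  proof
    fix x y assume xy: "x \<in> Q" "y \<in> Q" "inv a \<otimes> x \<otimes> a = inv a \<otimes> y \<otimes> a"
    then have "inv a \<otimes> x = inv a \<otimes> y" using Qc a by (meson m_closed inv_closed r_cancel subsetD)
    then show "x = y" using Qc a xy by (meson inv_closed l_cancel subsetD)
  qed
  then show "card (inv a <# Q #> a) = card Q" unfolding conj_eq_image by (rule card_image)
qed

lemma sylow_exists:
  fixes G (structure)
  assumes G: "group G" and fin: "finite (carrier G)" and p: "Factorial_Ring.prime p"
  shows "\<exists>P. subgroup P G \<and> card P = p ^ multiplicity p (order G)"
proof -
  have "order G = p ^ multiplicity p (order G) * (order G div p ^ multiplicity p (order G))"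
    by (simp add: multiplicity_dvd)
  then show ?thesis using sylow_thm[OF p G _ fin] by blast
qed

lemma sylow_index_ndvd:
  fixes G (structure)
  assumes G: "group G" and fin: "finite (carrier G)" and p: "Factorial_Ring.prime p"
    and P: "subgroup P G" "card P = p ^ multiplicity p (order G)"
  shows "\<not> p dvd card (coset_space G P)"
proof
  assume "p dvd card (coset_space G P)"
  then have "p * p ^ multiplicity p (order G) dvd card (coset_space G P) * card P"
    using P by simp
  then have "p ^ Suc (multiplicity p (order G)) dvd order G"
    using card_coset_space(1)[OF G P(1) fin] by simp
  moreover have "order G \<noteq> 0" by (metis G fin group.is_monoid monoid.one_closed card_0_eq empty_iff order_def)
  ultimately have "Suc (multiplicity p (order G)) \<le> multiplicity p (order G)"
    using multiplicity_geI p by (metis not_prime_unit)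
  then show False by simp
qed

lemma sylow_conj:
  fixes G (structure)
  assumes G: "group G" and fin: "finite (carrier G)" and p: "Factorial_Ring.prime p"
    and P: "subgroup P G" "card P = p ^ multiplicity p (order G)"
    and Q: "subgroup Q G" "card Q = p ^ k"
  shows "\<exists>a\<in>carrier G. inv a <# Q #> a \<subseteq> P"
proof -
  interpret group G by (rule G)
  have Pc: "P \<subseteq> carrier G" using P subgroup.subset by blast
  have Qc: "Q \<subseteq> carrier G" using Q subgroup.subset by blast
  let ?G' = "G\<lparr>carrier := Q\<rparr>"
  have G': "group ?G'" using subgroup.subgroup_is_group[OF Q(1) G] .
  have "\<exists>C\<in>coset_space G P. \<forall>q\<in>carrier ?G'. (\<lambda>q C. q <# C) q C = C"
  proof (rule fixed_point_pgroup[OF G' _ _ p])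
    show "finite (carrier ?G')" using fin Qc finite_subset by auto
    show "order ?G' = p ^ k" using Q by (simp add: order_def)
    show "finite (coset_space G P)" using card_coset_space(2)[OF G P(1) fin] .
    show "\<not> p dvd card (coset_space G P)" using sylow_index_ndvd[OF G fin p P] .
    show "q <# C \<in> coset_space G P" if "q \<in> carrier ?G'" "C \<in> coset_space G P" for q C
    proof -
      have qC: "q \<in> carrier G" "C \<in> coset_space G P" using that Qc by auto
      obtain b where b: "b \<in> carrier G" "C = b <# P" using qC(2) by (auto simp: coset_space_def)
      have "q \<in> carrier G" using qC by auto
      then have "q <# C = (q \<otimes> b) <# P" using b Pc by (simp add: lcos_m_assoc)
      then show ?thesis using b \<open>q \<in> carrier G\<close> by (auto simp: coset_space_def)
    qed
    show "\<one>\<^bsub>?G'\<^esub> <# C = C" if "C \<in> coset_space G P" for C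
      using that Pc by (auto simp: coset_space_def lcos_mult_one l_coset_subset_G)
    show "(q \<otimes>\<^bsub>?G'\<^esub> r) <# C = q <# (r <# C)" if "q \<in> carrier ?G'" "r \<in> carrier ?G'" "C \<in> coset_space G P" for q r C
    proof -
      have qr: "q \<in> carrier G" "r \<in> carrier G" "C \<in> coset_space G P" using that Qc by auto
      obtain b where b: "b \<in> carrier G" "C = b <# P" using qr(3) by (auto simp: coset_space_def)
      have "C \<subseteq> carrier G" using b Pc l_coset_subset_G by blast
      then show ?thesis using qr by (simp add: lcos_m_assoc)
    qed
  qed
  then obtain a where a: "a \<in> carrier G" and fx: "\<forall>q\<in>Q. q <# (a <# P) = a <# P"
    by (auto simp: coset_space_def)
  have "inv a \<otimes> q \<otimes> a \<in> P" if q: "q \<in> Q" for q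
  proof -
    have qc: "q \<in> carrier G" using q Qc by auto
    have "q \<otimes> a \<in> q <# (a <# P)"
    proof -
      have "a \<otimes> \<one> \<in> a <# P" using subgroup.one_closed[OF P(1)] unfolding l_coset_def by blast
      then have "a \<in> a <# P" using a by simp
      then show ?thesis unfolding l_coset_def by blast
    qed
    then have "q \<otimes> a \<in> a <# P" using fx q by simp
    then obtain x where x: "x \<in> P" "q \<otimes> a = a \<otimes> x" by (auto simp: l_coset_def)
    have "inv a \<otimes> q \<otimes> a = inv a \<otimes> (q \<otimes> a)" using a qc by (simp add: m_assoc)
    also have "\<dots> = inv a \<otimes> (a \<otimes> x)" using x by simp
    also have "\<dots> = x" using x a Pc by (simp add: m_assoc[symmetric] subset_iff)
    finally show ?thesis using x by simp
  qed
  then show ?thesis using a unfolding conj_eq_image by blast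
qed

lemma free_burnside:
  fixes G :: "('a, 'b) monoid_scheme" (structure) and U :: "'x set" and act :: "'a \<Rightarrow> 'x \<Rightarrow> 'x"
  assumes G: "group G" and fin: "finite (carrier G)" and gs: "gset G U act"
    and free: "\<And>g x. g \<in> carrier G \<Longrightarrow> x \<in> U \<Longrightarrow> act g x = x \<Longrightarrow> g = \<one>"
  shows "\<exists>k. card U = k * order G \<and> burnside_eq_mult_reg G U act (int k)"
proof -
  interpret group G by (rule G)
  have finX: "finite U" and cl: "\<And>g x. g \<in> carrier G \<Longrightarrow> x \<in> U \<Longrightarrow> act g x \<in> U"
    and one: "\<And>x. x \<in> U \<Longrightarrow> act \<one> x = x"
    and mul: "\<And>g h x. g \<in> carrier G \<Longrightarrow> h \<in> carrier G \<Longrightarrow> x \<in> U \<Longrightarrow> act (g \<otimes> h) x = act g (act h x)"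
    using gs unfolding gset_def by auto
  define Orb where "Orb x = (\<lambda>g. act g x) ` carrier G" for x
  define Os where "Os = Orb ` U"
  have orb_sub: "Orb x \<subseteq> U" if "x \<in> U" for x using cl that by (auto simp: Orb_def)
  have orb_self: "x \<in> Orb x" if "x \<in> U" for x
    using one[OF that] unfolding Orb_def by (metis image_eqI one_closed)
  have orb_eq: "Orb y = Orb x" if xy: "x \<in> U" "y \<in> Orb x" for x y
  proof -
    obtain h where h: "h \<in> carrier G" "y = act h x" using xy(2) by (auto simp: Orb_def)
    show ?thesis
    proof
      show "Orb y \<subseteq> Orb x"
        using h xy(1) by (auto simp: Orb_def mul[symmetric] intro!: image_eqI)
      show "Orb x \<subseteq> Orb y"
      proof
        fix z assume "z \<in> Orb x"
        then obtain g where g: "g \<in> carrier G" "z = act g x" by (auto simp: Orb_def)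
        have "act (g \<otimes> inv h) y = act g x"
          using g h xy(1) by (simp add: mul[symmetric] m_assoc)
        then show "z \<in> Orb y" using g h unfolding Orb_def by (metis image_eqI m_closed inv_closed)
      qed
    qed
  qed
  have finO: "finite Os" using finX by (simp add: Os_def)
  obtain e where e: "bij_betw e {0..<card Os} Os" using ex_bij_betw_nat_finite[OF finO] by blast
  define k where "k = card Os"
  define rep where "rep i = (SOME x. x \<in> e i)" for i
  have rep: "rep i \<in> U \<and> e i = Orb (rep i)" if "i < k" for i
  proof -
    have "e i \<in> Os" using e that by (auto simp: bij_betw_def k_def)
    then obtain x where x: "x \<in> U" "e i = Orb x" by (auto simp: Os_def)
    then have "rep i \<in> e i" unfolding rep_def using orb_self by (metis someI)
    then have r: "rep i \<in> Orb x" using x by simp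
    have "Orb (rep i) = Orb x" by (rule orb_eq[OF x(1) r])
    moreover have "rep i \<in> U" using orb_sub[OF x(1)] r by blast
    ultimately show ?thesis using x by simp
  qed
  define R where "R = reg_copies G k"
  define F where "F = (\<lambda>(i, g). act g (rep i))"
  have bijF: "bij_betw F R U"
  proof (rule bij_betw_imageI)
    show "inj_on F R"
    proof
      fix u v assume u: "u \<in> R" and v: "v \<in> R" and eq: "F u = F v"
      obtain i g where ig: "u = (i, g)" "i < k" "g \<in> carrier G" using u by (auto simp: R_def reg_copies_def)
      obtain j h where jh: "v = (j, h)" "j < k" "h \<in> carrier G" using v by (auto simp: R_def reg_copies_def)
      have eq': "act g (rep i) = act h (rep j)" using eq ig jh by (simp add: F_def)
      have "act g (rep i) \<in> Orb (rep i)" using ig by (auto simp: Orb_def)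
      then have "Orb (act g (rep i)) = Orb (rep i)" using orb_eq rep ig by blast
      moreover have "act h (rep j) \<in> Orb (rep j)" using jh by (auto simp: Orb_def)
      then have "Orb (act h (rep j)) = Orb (rep j)" using orb_eq rep jh by blast
      ultimately have "e i = e j" using eq' rep ig jh by simp
      then have ij: "i = j" using e ig jh by (auto simp: bij_betw_def inj_on_def k_def)
      have ri: "rep i \<in> U" using rep ig by blast
      have "act (inv h \<otimes> g) (rep i) = act (inv h) (act h (rep i))"
        using eq' ij ig jh ri by (simp add: mul)
      also have "\<dots> = act (inv h \<otimes> h) (rep i)" using mul[of "inv h" h "rep i"] jh ri by simp
      also have "\<dots> = rep i" using jh ri by (simp add: one)
      finally have "act (inv h \<otimes> g) (rep i) = rep i" .
      then have "inv h \<otimes> g = \<one>" using free[of "inv h \<otimes> g" "rep i"] ig jh ri by simp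
      then have "h \<otimes> (inv h \<otimes> g) = h" using jh by simp
      then have "g = h" using ig jh by (simp add: m_assoc[symmetric])
      then show "u = v" using ig jh ij by simp
    qed
    show "F ` R = U"
    proof
      show "F ` R \<subseteq> U" using rep cl by (auto simp: F_def R_def reg_copies_def)
      show "U \<subseteq> F ` R"
      proof
        fix x assume x: "x \<in> U"
        then have "Orb x \<in> Os" by (simp add: Os_def)
        then have "Orb x \<in> e ` {0..<k}" using e by (simp add: bij_betw_def k_def)
        then obtain i where i: "i < k" "e i = Orb x" by (metis atLeastLessThan_iff imageE)
        then have "x \<in> Orb (rep i)" using rep x orb_self by auto
        then obtain g where "g \<in> carrier G" "x = act g (rep i)" by (auto simp: Orb_def)
        then show "x \<in> F ` R" using i by (auto simp: F_def R_def reg_copies_def intro!: image_eqI[where x="(i, g)"])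
      qed
    qed
  qed
  have cardR: "card R = k * order G" by (simp add: R_def reg_copies_def card_cartesian_product order_def)
  have equiF: "F (reg_act G g u) = act g (F u)" if "g \<in> carrier G" "u \<in> R" for g u
    using that by (auto simp: F_def reg_act_def R_def reg_copies_def mul rep)
  have regR: "reg_act G g u \<in> R" if "g \<in> carrier G" "u \<in> R" for g u
    using that by (auto simp: reg_act_def R_def reg_copies_def)
  define Finv where "Finv = inv_into R F"
  have bijFinv: "bij_betw Finv U R" unfolding Finv_def by (rule bij_betw_inv_into[OF bijF])
  have equiFinv: "Finv (act g x) = reg_act G g (Finv x)" if g: "g \<in> carrier G" and x: "x \<in> U" for g x
  proof -
    have y: "Finv x \<in> R" "F (Finv x) = x" using bijFinv bijF x unfolding Finv_def
      by (auto simp: bij_betw_def f_inv_into_f)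
    have "F (reg_act G g (Finv x)) = act g x" using equiF[OF g y(1)] y(2) by simp
    then have "Finv (act g x) = Finv (F (reg_act G g (Finv x)))" by simp
    also have "\<dots> = reg_act G g (Finv x)"
    proof -
      have "inj_on F R" using bijF by (simp add: bij_betw_def)
      then show ?thesis using regR[OF g y(1)] unfolding Finv_def[of] by (rule inv_into_f_f)
    qed
    finally show ?thesis .
  qed
  define zeta :: "'a \<Rightarrow> nat \<times> 'a set \<Rightarrow> nat \<times> 'a set" where "zeta = (\<lambda>g x. x)"
  define f where "f = (\<lambda>s::'x + (nat \<times> 'a set). Inl (Finv (projl s)) :: (nat \<times> 'a) + (nat \<times> 'a set))"
  have "gset_iso G (sum_set U ({} :: (nat \<times> 'a set) set)) (sum_act act zeta) (sum_set R ({} :: (nat \<times> 'a set) set)) (sum_act (reg_act G) zeta)"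
    unfolding gset_iso_def
  proof (intro exI[of _ f] conjI ballI)
    show "bij_betw f (sum_set U {}) (sum_set R {})"
    proof (rule bij_betw_imageI)
      show "inj_on f (sum_set U {})"
        using bijFinv by (auto simp: f_def sum_set_def bij_betw_def inj_on_def)
      show "f ` sum_set U {} = sum_set R {}"
        using bijFinv by (auto simp: f_def sum_set_def bij_betw_def image_image)
    qed
    fix g and s :: "'x + nat \<times> 'a set" assume g: "g \<in> carrier G" and s: "s \<in> sum_set U {}"
    then obtain x where x: "x \<in> U" "s = Inl x" by (auto simp: sum_set_def)
    show "f (sum_act act zeta g s) = sum_act (reg_act G) zeta g (f s)"
      using x g by (simp add: f_def sum_act_def equiFinv)
  qed
  moreover have "gset G ({} :: (nat \<times> 'a set) set) zeta" by (simp add: gset_def)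
  ultimately have "burnside_eq_mult_reg G U act (int k)"
    unfolding burnside_eq_mult_reg_def R_def by auto
  moreover have "card U = k * order G" using bij_betw_same_card[OF bijF] cardR by simp
  ultimately show ?thesis by blast
qed

lemma card_sum_set:
  assumes "finite A" "finite B"
  shows "card (sum_set A B) = card A + card B"
  unfolding sum_set_def using assms by (subst card_Un_disjoint) (auto simp: card_image)

lemma finite_sum_set: "finite A \<Longrightarrow> finite B \<Longrightarrow> finite (sum_set A B)"
  by (simp add: sum_set_def)

lemma card_reg_copies:
  fixes G (structure)
  shows "card (reg_copies G n) = n * order G"
  by (simp add: reg_copies_def card_cartesian_product order_def)

lemma burnside_imp:
  fixes G :: "('a, 'b) monoid_scheme" (structure) and U :: "'x set" and act :: "'a \<Rightarrow> 'x \<Rightarrow> 'x"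
  assumes G: "group G" and fin: "finite (carrier G)" and finU: "finite U"
    and beq: "burnside_eq_mult_reg G U act m"
  shows "0 \<le> m \<and> card U = nat m * order G \<and> (\<forall>g\<in>carrier G. \<forall>x\<in>U. act g x = x \<longrightarrow> g = \<one>)"
proof -
  interpret group G by (rule G)
  have ordpos: "order G > 0" using fin by (metis card_gt_0_iff empty_iff one_closed order_def)
  obtain W :: "(nat \<times> 'a set) set" and \<zeta> where gW: "gset G W \<zeta>" and
    iso: "if 0 \<le> m then
           gset_iso G (sum_set U W) (sum_act act \<zeta>)
                      (sum_set (reg_copies G (nat m)) W) (sum_act (reg_act G) \<zeta>)
         else
           gset_iso G (sum_set (sum_set U (reg_copies G (nat (- m)))) W)
                      (sum_act (sum_act act (reg_act G)) \<zeta>) W \<zeta>"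
    using beq unfolding burnside_eq_mult_reg_def by blast
  have finW: "finite W" using gW by (simp add: gset_def)
  have finR: "finite (reg_copies G n)" for n using fin by (simp add: reg_copies_def)
  have m0: "0 \<le> m"
  proof (rule ccontr)
    assume "\<not> 0 \<le> m"
    then have "gset_iso G (sum_set (sum_set U (reg_copies G (nat (- m)))) W)
                      (sum_act (sum_act act (reg_act G)) \<zeta>) W \<zeta>" using iso by simp
    then obtain f where "bij_betw f (sum_set (sum_set U (reg_copies G (nat (- m)))) W) W"
      unfolding gset_iso_def by blast
    then have "card (sum_set (sum_set U (reg_copies G (nat (- m)))) W) = card W"
      by (rule bij_betw_same_card)
    then have "card U + nat (- m) * order G + card W = card W"
      using finU finW finR by (simp add: card_sum_set card_reg_copies finite_sum_set)
    then show False using \<open>\<not> 0 \<le> m\<close> ordpos by simp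
  qed
  then obtain f where bijf: "bij_betw f (sum_set U W) (sum_set (reg_copies G (nat m)) W)"
    and eqf: "\<forall>g\<in>carrier G. \<forall>s\<in>sum_set U W. f (sum_act act \<zeta> g s) = sum_act (reg_act G) \<zeta> g (f s)"
    using iso unfolding gset_iso_def by auto
  have "card (sum_set U W) = card (sum_set (reg_copies G (nat m)) W)"
    using bijf by (rule bij_betw_same_card)
  then have cardU: "card U = nat m * order G"
    using finU finW finR by (simp add: card_sum_set card_reg_copies)
  have free: "g = \<one>" if g: "g \<in> carrier G" and x: "x \<in> U" and gx: "act g x = x" for g x
  proof (rule ccontr)
    assume g1: "g \<noteq> \<one>"
    define FW where "FW = {w \<in> W. \<zeta> g w = w}"
    define A where "A = {s \<in> sum_set U W. sum_act act \<zeta> g s = s}"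
    define B where "B = {s \<in> sum_set (reg_copies G (nat m)) W. sum_act (reg_act G) \<zeta> g s = s}"
    have finB: "finite B" using finR finW by (simp add: B_def finite_sum_set)
    have "f ` A \<subseteq> B"
    proof
      fix t assume "t \<in> f ` A"
      then obtain s where s: "s \<in> A" "t = f s" by blast
      then have "t \<in> sum_set (reg_copies G (nat m)) W" using bijf by (auto simp: A_def bij_betw_def)
      moreover have "sum_act (reg_act G) \<zeta> g t = t"
      proof -
        have "s \<in> sum_set U W" "sum_act act \<zeta> g s = s" using s by (auto simp: A_def)
        then have "f (sum_act act \<zeta> g s) = sum_act (reg_act G) \<zeta> g (f s)" using eqf g by blast
        then show ?thesis using s \<open>sum_act act \<zeta> g s = s\<close> by simp
      qed
      ultimately show "t \<in> B" by (simp add: B_def)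
    qed
    moreover have "inj_on f A" using bijf by (auto simp: A_def bij_betw_def inj_on_def)
    ultimately have le: "card A \<le> card B" using finB by (simp add: card_inj_on_le)
    have "B \<subseteq> Inr ` FW"
    proof
      fix t assume t: "t \<in> B"
      show "t \<in> Inr ` FW"
      proof (cases t)
        case (Inl u)
        then obtain i h where u: "u = (i, h)" "h \<in> carrier G" using t by (auto simp: B_def sum_set_def reg_copies_def)
        then have "g \<otimes> h = h" using t Inl by (simp add: B_def sum_act_def reg_act_def)
        then have "g = \<one>" using u g by (metis l_one r_cancel_one')
        then show ?thesis using g1 by simp
      next
        case (Inr w)
        then show ?thesis using t by (auto simp: B_def FW_def sum_set_def sum_act_def)
      qed
    qed
    moreover have "finite (Inr ` FW :: ((nat \<times> 'a) + nat \<times> 'a set) set)" using finW by (simp add: FW_def)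
    ultimately have "card B \<le> card (Inr ` FW :: ((nat \<times> 'a) + nat \<times> 'a set) set)" by (meson card_mono)
    then have "card B \<le> card FW" by (simp add: card_image)
    moreover have "insert (Inl x) (Inr ` FW) \<subseteq> A"
      using x gx by (auto simp: A_def FW_def sum_set_def sum_act_def)
    moreover have "card (insert (Inl x) (Inr ` FW) :: ('x + nat \<times> 'a set) set) = Suc (card FW)"
    proof -
      have "finite FW" using finW by (simp add: FW_def)
      then have "card (insert (Inl x) (Inr ` FW) :: ('x + nat \<times> 'a set) set) = Suc (card (Inr ` FW :: ('x + nat \<times> 'a set) set))"
        by (subst card_insert_disjoint) auto
      also have "card (Inr ` FW :: ('x + nat \<times> 'a set) set) = card FW" by (rule card_image) simp
      finally show ?thesis .
    qed
    moreover have "finite A" using finU finW by (simp add: A_def finite_sum_set)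
    ultimately have "Suc (card FW) \<le> card B" using le by (metis card_mono order_trans)
    then show False using \<open>card B \<le> card FW\<close> by simp
  qed
  show ?thesis using m0 cardU free by blast
qed

lemma grp_cancel1:
  fixes G (structure)
  assumes "group G" "b \<in> carrier G" "g \<in> carrier G"
  shows "b \<otimes> (inv b \<otimes> g) = g" and "inv b \<otimes> (b \<otimes> g) = g"
proof -
  interpret group G by fact
  show "b \<otimes> (inv b \<otimes> g) = g" using assms(2,3) by (simp add: m_assoc[symmetric])
  show "inv b \<otimes> (b \<otimes> g) = g" using assms(2,3) by (simp add: m_assoc[symmetric])
qed

lemma lcoset_eq_imp:
  fixes G (structure)
  assumes G: "group G" and H: "subgroup H G" and a: "a \<in> carrier G" and c: "c \<in> carrier G"
    and eq: "c <# H = a <# H"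
  shows "inv a \<otimes> c \<in> H"
proof -
  interpret group G by (rule G)
  have "c \<otimes> \<one> \<in> c <# H" using subgroup.one_closed[OF H] unfolding l_coset_def by blast
  then have "c \<in> a <# H" using c eq by simp
  then obtain h where h: "h \<in> H" "c = a \<otimes> h" unfolding l_coset_def by blast
  have hc: "h \<in> carrier G" using h H subgroup.subset by blast
  have "inv a \<otimes> c = h" using h(2) a hc by (simp add: m_assoc[symmetric])
  then show ?thesis using h by simp
qed

definition UU :: "('a, 'b) monoid_scheme \<Rightarrow> 'a set \<Rightarrow> 'a set \<Rightarrow> ('a set \<times> 'a set) set" where
  "UU G H N = coset_space G H \<times> coset_space G N"

lemma prod_gset:
  fixes G (structure)
  assumes G: "group G" and fin: "finite (carrier G)" and H: "subgroup H G" and N: "subgroup N G"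
  shows "gset G (UU G H N) (prod_act (coset_act G) (coset_act G))"
proof -
  interpret group G by (rule G)
  have Hc: "H \<subseteq> carrier G" and Nc: "N \<subseteq> carrier G" using H N subgroup.subset by blast+
  have cl: "g <# C \<in> coset_space G K" if gCK: "g \<in> carrier G" "C \<in> coset_space G K" "K \<subseteq> carrier G" for g C K
  proof -
    obtain b where b: "b \<in> carrier G" "C = b <# K" using gCK(2) by (auto simp: coset_space_def)
    then have "g <# C = (g \<otimes> b) <# K" using gCK by (simp add: lcos_m_assoc)
    then show ?thesis using b gCK by (auto simp: coset_space_def)
  qed
  have sub: "C \<subseteq> carrier G" if "C \<in> coset_space G K" "K \<subseteq> carrier G" for C K
    using that l_coset_subset_G by (auto simp: coset_space_def)
  show ?thesis
    unfolding gset_def UU_def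
  proof (intro conjI ballI)
    show "finite (coset_space G H \<times> coset_space G N)"
      using card_coset_space(2)[OF G H fin] card_coset_space(2)[OF G N fin] by simp
  next
    fix g x assume "g \<in> carrier G" "x \<in> coset_space G H \<times> coset_space G N"
    then show "prod_act (coset_act G) (coset_act G) g x \<in> coset_space G H \<times> coset_space G N"
      using cl Hc Nc by (auto simp: prod_act_def coset_act_def)
  next
    fix x assume "x \<in> coset_space G H \<times> coset_space G N"
    then show "prod_act (coset_act G) (coset_act G) \<one> x = x"
      using sub Hc Nc by (auto simp: prod_act_def coset_act_def lcos_mult_one)
  next
    fix g h x assume "g \<in> carrier G" "h \<in> carrier G" "x \<in> coset_space G H \<times> coset_space G N"
    then show "prod_act (coset_act G) (coset_act G) (g \<otimes> h) x =
       prod_act (coset_act G) (coset_act G) g (prod_act (coset_act G) (coset_act G) h x)"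
      using sub Hc Nc by (auto simp: prod_act_def coset_act_def lcos_m_assoc)
  qed
qed

lemma card_UU:
  fixes G (structure)
  assumes G: "group G" and fin: "finite (carrier G)" and H: "subgroup H G" and N: "subgroup N G"
  shows "card (UU G H N) * card H * card N = order G * order G"
  using card_coset_space(1)[OF G H fin] card_coset_space(1)[OF G N fin]
  by (simp add: UU_def card_cartesian_product algebra_simps)
    (metis mult.assoc mult.commute)

lemma free_UU_iff:
  fixes G (structure)
  assumes G: "group G" and H: "subgroup H G" and N: "N \<lhd> G"
  shows "(\<forall>g\<in>carrier G. \<forall>x\<in>UU G H N. prod_act (coset_act G) (coset_act G) g x = x \<longrightarrow> g = \<one>)
         \<longleftrightarrow> H \<inter> N = {\<one>}"
proof -
  interpret group G by (rule G)
  interpret normal N G by (rule N)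
  have NS: "subgroup N G" using N normal_imp_subgroup by blast
  have Hc: "H \<subseteq> carrier G" and Nc: "N \<subseteq> carrier G" using H NS subgroup.subset by blast+
  show ?thesis
  proof
    assume fr: "\<forall>g\<in>carrier G. \<forall>x\<in>UU G H N. prod_act (coset_act G) (coset_act G) g x = x \<longrightarrow> g = \<one>"
    have x: "(H, N) \<in> UU G H N"
    proof -
      have "\<one> <# H = H" "\<one> <# N = N" using Hc Nc lcos_mult_one by auto
      then have "H \<in> coset_space G H" "N \<in> coset_space G N" unfolding coset_space_def
        using one_closed by force+
      then show ?thesis unfolding UU_def by simp
    qed
    have "g = \<one>" if "g \<in> H" "g \<in> N" for g
    proof -
      have gc: "g \<in> carrier G" using that Hc by auto
      have "g <# H = H" by (rule coset_join3[OF gc H that(1)])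
      moreover have "g <# N = N" by (rule coset_join3[OF gc NS that(2)])
      ultimately have "prod_act (coset_act G) (coset_act G) g (H, N) = (H, N)"
        by (simp add: prod_act_def coset_act_def)
      then show ?thesis using fr x gc by blast
    qed
    then show "H \<inter> N = {\<one>}" using subgroup.one_closed[OF H] subgroup.one_closed[OF NS] by blast
  next
    assume HN: "H \<inter> N = {\<one>}"
    show "\<forall>g\<in>carrier G. \<forall>x\<in>UU G H N. prod_act (coset_act G) (coset_act G) g x = x \<longrightarrow> g = \<one>"
    proof (intro ballI impI)
      fix g x assume g: "g \<in> carrier G" and x: "x \<in> UU G H N" and fx: "prod_act (coset_act G) (coset_act G) g x = x"
      obtain a b where ab: "a \<in> carrier G" "b \<in> carrier G" "x = (a <# H, b <# N)"
        using x by (auto simp: UU_def coset_space_def)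
      have "g <# (a <# H) = a <# H" "g <# (b <# N) = b <# N"
        using fx ab by (auto simp: prod_act_def coset_act_def)
      then have "(g \<otimes> a) <# H = a <# H" "(g \<otimes> b) <# N = b <# N"
        using g ab Hc Nc by (simp_all add: lcos_m_assoc)
      then have h1: "inv a \<otimes> (g \<otimes> a) \<in> H" and n1: "inv b \<otimes> (g \<otimes> b) \<in> N"
        using lcoset_eq_imp[OF G H ab(1)] lcoset_eq_imp[OF G NS ab(2)] g ab by auto
      have "inv b \<otimes> g \<otimes> b \<in> N" using n1 g ab by (simp add: m_assoc)
      then have "b \<otimes> (inv b \<otimes> g \<otimes> b) \<otimes> inv b \<in> N" using ab inv_op_closed2 by blast
      moreover have "b \<otimes> (inv b \<otimes> g \<otimes> b) \<otimes> inv b = g"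
        using ab g by (simp add: m_assoc grp_cancel1[OF G])
      ultimately have gN: "g \<in> N" by simp
      have "inv a \<otimes> g \<otimes> a \<in> N" using inv_op_closed1[OF ab(1) gN] .
      then have "inv a \<otimes> (g \<otimes> a) \<in> H \<inter> N" using h1 g ab by (simp add: m_assoc)
      then have "inv a \<otimes> (g \<otimes> a) = \<one>" using HN by blast
      then have "a \<otimes> (inv a \<otimes> (g \<otimes> a)) = a" using ab by simp
      then have "g \<otimes> a = a" using ab g by (simp add: m_assoc[symmetric])
      then show "g = \<one>" using ab g by (metis r_cancel_one)
    qed
  qed
qed

lemma card_set_mult_trivial:
  fixes G (structure)
  assumes G: "group G" and A: "subgroup A G" and B: "subgroup B G" and AB: "A \<inter> B = {\<one>}"
  shows "card (A <#> B) = card A * card B"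
proof -
  interpret group G by (rule G)
  have Ac: "A \<subseteq> carrier G" and Bc: "B \<subseteq> carrier G" using A B subgroup.subset by blast+
  have eq: "A <#> B = (\<lambda>(a, b). a \<otimes> b) ` (A \<times> B)" by (auto simp: set_mult_def)
  have "inj_on (\<lambda>(a, b). a \<otimes> b) (A \<times> B)"
  proof (rule inj_onI, clarify)
    fix a b a' b' assume a: "a \<in> A" "a' \<in> A" and b: "b \<in> B" "b' \<in> B" and e: "a \<otimes> b = a' \<otimes> b'"
    have ac: "a \<in> carrier G" "a' \<in> carrier G" "b \<in> carrier G" "b' \<in> carrier G" using a b Ac Bc by auto
    have "inv a' \<otimes> (a \<otimes> b) = inv a' \<otimes> (a' \<otimes> b')" using e by simp
    then have "inv a' \<otimes> a \<otimes> b = b'" using ac by (simp add: m_assoc grp_cancel1[OF G])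
    then have "inv a' \<otimes> a \<otimes> b \<otimes> inv b = b' \<otimes> inv b" by simp
    then have x: "inv a' \<otimes> a = b' \<otimes> inv b" using ac by (simp add: m_assoc)
    have "inv a' \<otimes> a \<in> A" using a A by (simp add: subgroup.m_closed subgroup.m_inv_closed)
    moreover have "b' \<otimes> inv b \<in> B" using b B by (simp add: subgroup.m_closed subgroup.m_inv_closed)
    ultimately have "inv a' \<otimes> a = \<one>" using x AB by auto
    then have "a' \<otimes> (inv a' \<otimes> a) = a'" using ac by simp
    then have aa: "a = a'" using ac by (simp add: grp_cancel1[OF G])
    then have "a \<otimes> b = a \<otimes> b'" using e by simp
    then have "b = b'" using ac by simp
    then show "a = a' \<and> b = b'" using aa by simp
  qed
  then show ?thesis unfolding eq by (simp add: card_image card_cartesian_product)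
qed

lemma subgroup_card_dvd:
  fixes G (structure)
  assumes G: "group G" and A: "subgroup A G" and B: "subgroup B G" and AB: "A \<subseteq> B"
  shows "card A dvd card B"
proof -
  interpret group G by (rule G)
  have "subgroup A (G\<lparr>carrier := B\<rparr>)" by (rule subgroup_incl[OF A B AB])
  moreover have "group (G\<lparr>carrier := B\<rparr>)" by (rule subgroup.subgroup_is_group[OF B G])
  ultimately have "card (rcosets\<^bsub>G\<lparr>carrier := B\<rparr>\<^esub> A) * card A = order (G\<lparr>carrier := B\<rparr>)"
    using group.lagrange by blast
  then show ?thesis by (metis dvd_triv_right order_def partial_object.select_convs(1) partial_object.surjective partial_object.update_convs(1))
qed

lemma sylow_in_subgroup:
  fixes G (structure)
  assumes G: "group G" and fin: "finite (carrier G)" and p: "Factorial_Ring.prime p" and H: "subgroup H G"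
  shows "\<exists>Q. subgroup Q G \<and> Q \<subseteq> H \<and> card Q = p ^ multiplicity p (card H)"
proof -
  interpret group G by (rule G)
  have GH: "group (G\<lparr>carrier := H\<rparr>)" by (rule subgroup.subgroup_is_group[OF H G])
  have "finite (carrier (G\<lparr>carrier := H\<rparr>))" using finite_subset[OF subgroup.subset[OF H] fin] by simp
  then obtain Q where Q: "subgroup Q (G\<lparr>carrier := H\<rparr>)" "card Q = p ^ multiplicity p (order (G\<lparr>carrier := H\<rparr>))"
    using sylow_exists[OF GH _ p] by blast
  have "subgroup Q G" by (rule incl_subgroup[OF H Q(1)])
  moreover have "Q \<subseteq> H" using subgroup.subset[OF Q(1)] by simp
  ultimately show ?thesis using Q(2) by (auto simp: order_def)
qed

lemma order_pos:
  fixes G (structure)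
  assumes "group G" "finite (carrier G)"
  shows "order G > 0"
  using assms by (metis card_gt_0_iff empty_iff group.is_monoid monoid.one_closed order_def)

lemma key_imp:
  fixes G (structure)
  assumes G: "group G" and fin: "finite (carrier G)" and N: "N \<lhd> G" and H: "subgroup H G"
    and beq: "burnside_eq_mult_reg G (coset_space G H \<times> coset_space G N) (prod_act (coset_act G) (coset_act G)) m"
  shows "0 \<le> m \<and> nat m * card H * card N = order G \<and> H \<inter> N = {\<one>}"
proof -
  have NS: "subgroup N G" using N normal_imp_subgroup by blast
  have gs: "gset G (UU G H N) (prod_act (coset_act G) (coset_act G))" by (rule prod_gset[OF G fin H NS])
  then have finU: "finite (UU G H N)" by (simp add: gset_def)
  have r: "0 \<le> m \<and> card (UU G H N) = nat m * order G \<and>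
     (\<forall>g\<in>carrier G. \<forall>x\<in>UU G H N. prod_act (coset_act G) (coset_act G) g x = x \<longrightarrow> g = \<one>)"
    by (rule burnside_imp[OF G fin finU]) (use beq in \<open>simp add: UU_def\<close>)
  then have HN: "H \<inter> N = {\<one>}" using free_UU_iff[OF G H N] by blast
  have "card (UU G H N) * card H * card N = order G * order G" by (rule card_UU[OF G fin H NS])
  then have "order G * (nat m * card H * card N) = order G * order G" using r by (simp add: algebra_simps)
  then have "nat m * card H * card N = order G" using order_pos[OF G fin] by simp
  then show ?thesis using r HN by blast
qed

lemma key_exists:
  fixes G (structure)
  assumes G: "group G" and fin: "finite (carrier G)" and N: "N \<lhd> G" and H: "subgroup H G"
    and HN: "H \<inter> N = {\<one>}"
  shows "\<exists>k. burnside_eq_mult_reg G (coset_space G H \<times> coset_space G N) (prod_act (coset_act G) (coset_act G)) (int k)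
            \<and> k * card H * card N = order G"
proof -
  have NS: "subgroup N G" using N normal_imp_subgroup by blast
  have gs: "gset G (UU G H N) (prod_act (coset_act G) (coset_act G))" by (rule prod_gset[OF G fin H NS])
  have free: "\<forall>g\<in>carrier G. \<forall>x\<in>UU G H N. prod_act (coset_act G) (coset_act G) g x = x \<longrightarrow> g = \<one>"
    using free_UU_iff[OF G H N] HN by blast
  obtain k where k: "card (UU G H N) = k * order G"
    "burnside_eq_mult_reg G (UU G H N) (prod_act (coset_act G) (coset_act G)) (int k)"
    using free_burnside[OF G fin gs] free by blast
  have "card (UU G H N) * card H * card N = order G * order G" by (rule card_UU[OF G fin H NS])
  then have "order G * (k * card H * card N) = order G * order G" using k by (simp add: algebra_simps)
  then have "k * card H * card N = order G" using order_pos[OF G fin] by simp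
  then show ?thesis using k by (auto simp: UU_def)
qed

lemma mult_bound_contra:
  assumes p: "Factorial_Ring.prime (p::nat)" and eq: "k * p ^ e * d = g" and g0: "g \<noteq> 0"
    and e: "e = multiplicity p g" and pk: "p dvd k"
  shows False
proof -
  obtain k' where "k = p * k'" using pk by blast
  then have "p ^ Suc e dvd g" using eq by (metis dvd_mult dvd_mult2 dvd_refl mult.assoc mult.commute power_Suc)
  then have "Suc e \<le> multiplicity p g" using multiplicity_geI g0 p by (metis not_prime_unit)
  then show False using e by simp
qed

lemma split_index:
  fixes G (structure)
  assumes G: "group G" and fin: "finite (carrier G)" and N: "N \<lhd> G" and Hs: "conj_class_reps G Hs"
    and p: "Factorial_Ring.prime p"
    and spl: "\<And>P. sylow_subgroup G p P \<Longrightarrow> has_complement G (N \<inter> P) P"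
  shows "\<exists>m \<in> Ind_of G Hs (coset_space G N) (coset_act G). \<not> int p dvd m"
proof -
  interpret group G by (rule G)
  interpret normal N G by (rule N)
  have NS: "subgroup N G" using N normal_imp_subgroup by blast
  obtain P where P: "subgroup P G" "card P = p ^ multiplicity p (order G)"
    using sylow_exists[OF G fin p] by blast
  then have "has_complement G (N \<inter> P) P" using spl by (simp add: sylow_subgroup_def)
  then obtain K where K: "subgroup K G" "K \<subseteq> P" "K \<inter> (N \<inter> P) = {\<one>}" "set_mult G (N \<inter> P) K = P"
    unfolding has_complement_def by blast
  obtain H g where H: "H \<in> Hs" and g: "g \<in> carrier G" and KH: "K = r_coset G (l_coset G g H) (inv g)"
    using Hs K(1) unfolding conj_class_reps_def by metis
  have HS: "subgroup H G" using Hs H unfolding conj_class_reps_def by blast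
  have Hc: "H \<subseteq> carrier G" using HS subgroup.subset by blast
  have KH': "K = inv (inv g) <# H #> inv g" using KH g by simp
  have cardK: "card K = card H" using conj_subgroup(2)[OF G HS inv_closed[OF g]] KH' by simp
  have HN: "H \<inter> N = {\<one>}"
  proof -
    have "x = \<one>" if x: "x \<in> H" "x \<in> N" for x
    proof -
      have xc: "x \<in> carrier G" using x Hc by auto
      have "g \<otimes> x \<otimes> inv g \<in> K" using KH x(1) unfolding conj_eq_image by blast
      moreover have "g \<otimes> x \<otimes> inv g \<in> N" using inv_op_closed2[OF g x(2)] .
      moreover have "g \<otimes> x \<otimes> inv g \<in> P" using K(2) calculation(1) by blast
      ultimately have "g \<otimes> x \<otimes> inv g = \<one>" using K(3) by blast
      then have "inv g \<otimes> (g \<otimes> x \<otimes> inv g) \<otimes> g = \<one>" using g by simp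
      moreover have "inv g \<otimes> (g \<otimes> x \<otimes> inv g) \<otimes> g = x"
        using g xc by (simp add: m_assoc grp_cancel1[OF G])
      ultimately show ?thesis by simp
    qed
    then show ?thesis using subgroup.one_closed[OF HS] subgroup.one_closed[OF NS] by blast
  qed
  obtain k where k: "burnside_eq_mult_reg G (coset_space G H \<times> coset_space G N) (prod_act (coset_act G) (coset_act G)) (int k)"
    "k * card H * card N = order G"
    using key_exists[OF G fin N HS HN] by blast
  have HSo: "H \<in> S_of G Hs (coset_space G N) (coset_act G)" using H k(1) unfolding S_of_def by blast
  have kInd: "int k \<in> Ind_of G Hs (coset_space G N) (coset_act G)" using HSo k(1) unfolding Ind_of_def by blast
  have NP: "subgroup (N \<inter> P) G" using subgroups_Inter_pair[OF NS P(1)] .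
  have "card P = card (N \<inter> P) * card K"
    using card_set_mult_trivial[OF G NP K(1)] K(3,4) by (simp add: Int_commute)
  moreover have "card (N \<inter> P) dvd card N" using subgroup_card_dvd[OF G NP NS] by blast
  then obtain d where d: "card N = card (N \<inter> P) * d" by blast
  ultimately have "k * p ^ multiplicity p (order G) * d = order G"
    using k(2) cardK P(2) by (metis mult.assoc mult.commute)
  then have "\<not> p dvd k"
    using mult_bound_contra[OF p _ _ refl] order_pos[OF G fin] by (metis less_not_refl2)
  then have "\<not> int p dvd int k" by simp
  then show ?thesis using kInd by blast
qed

lemma index_split:
  fixes G (structure)
  assumes G: "group G" and fin: "finite (carrier G)" and N: "N \<lhd> G" and Hs: "conj_class_reps G Hs"
    and p: "Factorial_Ring.prime p" and P: "sylow_subgroup G p P"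
    and mI: "m \<in> Ind_of G Hs (coset_space G N) (coset_act G)" and nd: "\<not> int p dvd m"
  shows "has_complement G (N \<inter> P) P"
proof -
  interpret group G by (rule G)
  interpret normal N G by (rule N)
  have NS: "subgroup N G" using N normal_imp_subgroup by blast
  have PS: "subgroup P G" and cardP: "card P = p ^ multiplicity p (order G)"
    using P by (auto simp: sylow_subgroup_def)
  have Pc: "P \<subseteq> carrier G" using PS subgroup.subset by blast
  obtain H where H: "H \<in> Hs"
    and beq: "burnside_eq_mult_reg G (coset_space G H \<times> coset_space G N) (prod_act (coset_act G) (coset_act G)) m"
    using mI unfolding Ind_of_def S_of_def by blast
  have HS: "subgroup H G" using Hs H unfolding conj_class_reps_def by blast
  have Hc: "H \<subseteq> carrier G" using HS subgroup.subset by blast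
  have r: "0 \<le> m \<and> nat m * card H * card N = order G \<and> H \<inter> N = {\<one>}"
    by (rule key_imp[OF G fin N HS beq])
  define mm where "mm = nat m"
  have mmeq: "mm * card H * card N = order G" and HN: "H \<inter> N = {\<one>}" using r by (auto simp: mm_def)
  have "int mm = m" using r by (simp add: mm_def)
  then have ndm: "\<not> p dvd mm" using nd by (metis int_dvd_int_iff)
  have g0: "order G \<noteq> 0" using order_pos[OF G fin] by simp
  then have nz: "mm \<noteq> 0" "card H \<noteq> 0" "card N \<noteq> 0" using mmeq by (metis mult_is_0)+
  have pe: "prime_elem p" using p by (simp add: prime_def)
  have ve: "multiplicity p (order G) = multiplicity p (card H) + multiplicity p (card N)"
  proof -
    have "multiplicity p (order G) = multiplicity p (mm * card H) + multiplicity p (card N)"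
      using mmeq[symmetric] nz pe by (simp add: prime_elem_multiplicity_mult_distrib)
    also have "multiplicity p (mm * card H) = multiplicity p mm + multiplicity p (card H)"
      using nz pe by (simp add: prime_elem_multiplicity_mult_distrib)
    also have "multiplicity p mm = 0" using ndm by (rule not_dvd_imp_multiplicity_0)
    finally show ?thesis by simp
  qed
  obtain Q where Q: "subgroup Q G" "Q \<subseteq> H" "card Q = p ^ multiplicity p (card H)"
    using sylow_in_subgroup[OF G fin p HS] by blast
  obtain R where R: "subgroup R G" "R \<subseteq> N" "card R = p ^ multiplicity p (card N)"
    using sylow_in_subgroup[OF G fin p NS] by blast
  obtain a where a: "a \<in> carrier G" "inv a <# Q #> a \<subseteq> P"
    using sylow_conj[OF G fin p PS cardP Q(1,3)] by blast
  obtain b where b: "b \<in> carrier G" "inv b <# R #> b \<subseteq> P"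
    using sylow_conj[OF G fin p PS cardP R(1,3)] by blast
  define K where "K = inv a <# Q #> a"
  have KS: "subgroup K G" and cardK: "card K = card Q"
    using conj_subgroup[OF G Q(1) a(1)] by (auto simp: K_def)
  have KP: "K \<subseteq> P" using a by (simp add: K_def)
  have KN: "K \<inter> N \<subseteq> {\<one>}"
  proof
    fix x assume x: "x \<in> K \<inter> N"
    then obtain q where q: "q \<in> Q" "x = inv a \<otimes> q \<otimes> a" unfolding K_def conj_eq_image by blast
    have qc: "q \<in> carrier G" using q Q(2) Hc by auto
    have "a \<otimes> x \<otimes> inv a \<in> N" using inv_op_closed2[OF a(1)] x by blast
    moreover have "a \<otimes> x \<otimes> inv a = q" using q(2) a(1) qc by (simp add: m_assoc grp_cancel1[OF G])
    ultimately have "q \<in> H \<inter> N" using q Q(2) by auto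
    then have "q = \<one>" using HN by blast
    then show "x \<in> {\<one>}" using q a by simp
  qed
  define R' where "R' = inv b <# R #> b"
  have cardR': "card R' = card R" using conj_subgroup[OF G R(1) b(1)] by (simp add: R'_def)
  have R'NP: "R' \<subseteq> N \<inter> P"
  proof
    fix x assume "x \<in> R'"
    then obtain r where rr: "r \<in> R" "x = inv b \<otimes> r \<otimes> b" unfolding R'_def conj_eq_image by blast
    have "x \<in> N" using inv_op_closed1[OF b(1)] rr R(2) by blast
    moreover have "x \<in> P" using b(2) \<open>x \<in> R'\<close> by (auto simp: R'_def)
    ultimately show "x \<in> N \<inter> P" by blast
  qed
  have finP: "finite P" using finite_subset[OF Pc fin] .
  have "card R' \<le> card (N \<inter> P)" using R'NP finP by (meson card_mono finite_Int)
  then have NPge: "p ^ multiplicity p (card N) \<le> card (N \<inter> P)" using cardR' R(3) by simp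
  have NP: "subgroup (N \<inter> P) G" using subgroups_Inter_pair[OF NS PS] .
  have one: "\<one> \<in> K" "\<one> \<in> N" "\<one> \<in> P" using KS NS PS subgroup.one_closed by blast+
  have KNP: "K \<inter> (N \<inter> P) = {\<one>}" using KN one by blast
  have sub: "set_mult G (N \<inter> P) K \<subseteq> P"
    using KP PS by (auto simp: set_mult_def subgroup.m_closed)
  have "card (set_mult G (N \<inter> P) K) = card (N \<inter> P) * card K"
    using card_set_mult_trivial[OF G NP KS] KNP by (simp add: Int_commute)
  also have "\<dots> \<ge> p ^ multiplicity p (card N) * p ^ multiplicity p (card H)"
    using NPge cardK Q(3) by simp
  finally have "card P \<le> card (set_mult G (N \<inter> P) K)"
    using cardP ve by (simp add: power_add mult.commute)
  then have "set_mult G (N \<inter> P) K = P" using card_seteq[OF finP sub] by blast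
  then show ?thesis unfolding has_complement_def using KS KP KNP by blast
qed

theorem theorem3p9:
  fixes G :: "('a, 'b) monoid_scheme" and N :: "'a set" and Hs :: "'a set set"
  assumes "group G" and "finite (carrier G)" and "N \<lhd> G"
    and "conj_class_reps G Hs"
  shows "K_rS G Hs (coset_space G N) (coset_act G) = Some 1 \<longleftrightarrow>
         (\<forall>(p::nat) P. Factorial_Ring.prime p \<longrightarrow> sylow_subgroup G p P \<longrightarrow> has_complement G (N \<inter> P) P)"
proof
  let ?Ind = "Ind_of G Hs (coset_space G N) (coset_act G)"
  let ?S = "S_of G Hs (coset_space G N) (coset_act G)"
  assume K: "K_rS G Hs (coset_space G N) (coset_act G) = Some 1"
  then have gcd1: "Gcd ?Ind = 1" by (auto simp: K_rS_def split: if_splits)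
  show "\<forall>(p::nat) P. Factorial_Ring.prime p \<longrightarrow> sylow_subgroup G p P \<longrightarrow> has_complement G (N \<inter> P) P"
  proof (intro allI impI)
    fix p :: nat and P assume p: "Factorial_Ring.prime p" and P: "sylow_subgroup G p P"
    have "\<exists>m\<in>?Ind. \<not> int p dvd m"
    proof (rule ccontr)
      assume "\<not> (\<exists>m\<in>?Ind. \<not> int p dvd m)"
      then have "int p dvd Gcd ?Ind" by (intro Gcd_greatest) blast
      then have "int p dvd 1" using gcd1 by simp
      then show False using p by (simp add: prime_gt_1_nat)
    qed
    then obtain m where "m \<in> ?Ind" "\<not> int p dvd m" by blast
    then show "has_complement G (N \<inter> P) P" using index_split[OF assms p P] by blast
  qed
next
  let ?Ind = "Ind_of G Hs (coset_space G N) (coset_act G)"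
  let ?S = "S_of G Hs (coset_space G N) (coset_act G)"
  assume spl: "\<forall>(p::nat) P. Factorial_Ring.prime p \<longrightarrow> sylow_subgroup G p P \<longrightarrow> has_complement G (N \<inter> P) P"
  have C: "\<exists>m\<in>?Ind. \<not> int p dvd m" if p: "Factorial_Ring.prime p" for p :: nat
    using split_index[OF assms p] spl p by blast
  obtain m2 where m2: "m2 \<in> ?Ind" "\<not> int 2 dvd m2" using C[of 2] by auto
  have Sne: "?S \<noteq> {}" using m2(1) unfolding Ind_of_def by blast
  have "Gcd ?Ind = 1"
  proof (rule ccontr)
    assume d1: "Gcd ?Ind \<noteq> 1"
    show False
    proof (cases "Gcd ?Ind = 0")
      case True
      then have "m2 = 0" using Gcd_dvd[OF m2(1)] by (metis dvd_0_left)
      then show False using m2(2) by simp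
    next
      case False
      have "\<not> is_unit (Gcd ?Ind)"
      proof
        assume "is_unit (Gcd ?Ind)"
        then have "normalize (Gcd ?Ind) = 1" by (rule is_unit_normalize)
        then show False using d1 by (simp add: normalize_Gcd)
      qed
      then obtain q :: int where q: "q dvd Gcd ?Ind" "Factorial_Ring.prime q"
        using prime_divisor_exists[OF False] by blast
      have q0: "0 \<le> q" and qn: "Factorial_Ring.prime (nat q)" using q(2) prime_int_nat_transfer by blast+
      obtain m where m: "m \<in> ?Ind" "\<not> int (nat q) dvd m" using C[OF qn] by blast
      have "q dvd m" using q(1) Gcd_dvd[OF m(1)] by (rule dvd_trans)
      then show False using m(2) q0 by simp
    qed
  qed
  then show "K_rS G Hs (coset_space G N) (coset_act G) = Some 1"
    using Sne by (simp add: K_rS_def)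
qed

end
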